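(* Let $p$ and $m$ be positive integers. The binomial coefficients $\binom{\lambda p+1}{2}$ are divisible by $m$ for all non-negative integers $\lambda$ if and only if either $m$ is odd and $m\mid p$, or $m$ is even and $2m\mid p$. *)

theory Defs
  imports Main
begin

end

theory Submission
  imports Defs
begin

lemma two_choose: "2 * ((n::nat) choose 2) = n * (n - 1)"
proof -
  have "even (n * (n - 1))" by (cases n) auto
  thus ?thesis by (simp add: choose_two)
qed

lemma key: "(m::nat) dvd (x + 1) choose 2 \<longleftrightarrow> 2 * m dvd (x + 1) * x"
proof -
  have "(x+1) * x = 2 * ((x+1) choose 2)" using two_choose[of "x+1"] by simp
  thus ?thesis by simp
qed

theorem proposition13:
  fixes p m :: nat
  assumes "p > 0" and "m > 0"
  shows "(\<forall>l::nat. m dvd ((l * p + 1) choose 2)) \<longleftrightarrow>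
         ((odd m \<and> m dvd p) \<or> (even m \<and> 2 * m dvd p))"
proof
  assume H: "\<forall>l::nat. m dvd ((l * p + 1) choose 2)"
  have h1: "2*m dvd (p+1)*p" using H[rule_format, of 1] key by simp
  have h2: "2*m dvd (2*p+1)*(2*p)" using H[rule_format, of 2] key by simp
  have d: "2*m dvd (2*p+1)*(2*p) - 2*((p+1)*p)" by (rule dvd_diff_nat[OF h2 dvd_mult[OF h1]])
  have eq: "(2*p+1)*(2*p) - 2*((p+1)*p) = 2*(p*p)" by (simp add: algebra_simps)
  have "2*m dvd 2*(p*p)" using d unfolding eq .
  hence "m dvd p*p" by simp
  moreover have "m dvd (p+1)*p" using h1 by (metis dvd_mult_right dvd_mult_left mult.commute)
  ultimately have d2: "m dvd (p+1)*p - p*p" by (rule dvd_diff_nat[rotated])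
  have eq2: "(p+1)*p - p*p = p" by (simp add: algebra_simps)
  have mp: "m dvd p" using d2 unfolding eq2 .
  show "(odd m \<and> m dvd p) \<or> (even m \<and> 2 * m dvd p)"
  proof (cases "even m")
    case True
    obtain k where k: "p = m*k" using mp by blast
    have "2*m dvd m*(k*(m*k+1))" using h1 k by (simp add: algebra_simps)
    hence "2 dvd k*(m*k+1)" using assms(2) by (simp add: mult.commute[of 2])
    hence "even k" using True by auto
    then show ?thesis using True k by auto
  qed (use mp in auto)
next
  assume R: "(odd m \<and> m dvd p) \<or> (even m \<and> 2 * m dvd p)"
  show "\<forall>l::nat. m dvd ((l * p + 1) choose 2)"
  proof
    fix l
    show "m dvd ((l * p + 1) choose 2)"
    proof (cases "even m")
      case True
      hence "2*m dvd l*p" using R by auto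
      thus ?thesis using key by (metis dvd_mult)
    next
      case False
      hence mp: "m dvd l*p" using R by auto
      have "even ((l*p+1)*(l*p))" by simp
      moreover have "m dvd (l*p+1)*(l*p)" using mp by simp
      moreover have "coprime 2 m" using False by simp
      ultimately have "2*m dvd (l*p+1)*(l*p)" by (simp add: divides_mult)
      thus ?thesis using key by blast
    qed
  qed
qed

end
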